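(* Let $b\ge2$ be an integer and let $w=d_1\dots d_p$ be a fixed block of $b$-ary digits with $p\ge1$. Let $u=d_1\dots d_{p-1}$ and $v=d_2\dots d_p$. Then $Z_w(\epsilon,0,u)=Z_w(v,0)$ as power series in $t$.
   Context: Strings are finite sequences over $\{0,\dots,b-1\}$, and $\epsilon$ is the empty string. $k_w(X)$ is the number of possibly overlapping occurrences of $w$ in $X$. $Z_w(\epsilon,0,u)=\sum_l a_lt^l$, where $a_l$ is the number of strings of length $l$ with $k_w=0$ and suffix $u$. $Z_w(v,0)=\sum_l c_lt^l$, where $c_l$ is the number of strings of length $l$ with $k_w=0$ and prefix $v$. *)

theory Defs
  imports Main "HOL-Library.Sublist" "HOL-Computational_Algebra.Formal_Power_Series"
begin

definition bstrings :: "nat \<Rightarrow> nat \<Rightarrow> nat list set" where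
  "bstrings b l = {X. length X = l \<and> set X \<subseteq> {..<b}}"

definition occ :: "nat list \<Rightarrow> nat list \<Rightarrow> nat" where
  "occ w X = card {i. i + length w \<le> length X \<and> take (length w) (drop i X) = w}"

text \<open>Z_w(epsilon,0,u): coefficient of t^l counts b-ary strings of length l with k_w = 0 and suffix u.\<close>
definition Z_suffix :: "nat \<Rightarrow> nat list \<Rightarrow> nat list \<Rightarrow> nat fps" where
  "Z_suffix b w u = Abs_fps (\<lambda>l. card {X \<in> bstrings b l. occ w X = 0 \<and> suffix u X})"

text \<open>Z_w(v,0): coefficient of t^l counts b-ary strings of length l with k_w = 0 and prefix v.\<close>
definition Z_prefix :: "nat \<Rightarrow> nat list \<Rightarrow> nat list \<Rightarrow> nat fps" where
  "Z_prefix b w v = Abs_fps (\<lambda>l. card {X \<in> bstrings b l. occ w X = 0 \<and> prefix v X})"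

end

theory Submission
  imports Defs
begin

definition occ_at :: "nat list \<Rightarrow> nat list \<Rightarrow> nat \<Rightarrow> bool" where
  "occ_at w X i \<longleftrightarrow> i + length w \<le> length X \<and> take (length w) (drop i X) = w"

lemma occ0: "occ w X = 0 \<longleftrightarrow> (\<forall>i. \<not> occ_at w X i)"
proof -
  have "finite {i. i + length w \<le> length X \<and> take (length w) (drop i X) = w}"
    by (rule finite_subset[of _ "{..length X}"]) auto
  then show ?thesis unfolding occ_def occ_at_def by auto
qed

lemma occ_at_append: "occ_at w Y i \<Longrightarrow> occ_at w (Y @ Z) i"
  by (auto simp: occ_at_def)

lemma occ_at_back: "occ_at w (Y @ Z) i \<Longrightarrow> i + length w \<le> length Y \<Longrightarrow> occ_at w Y i"
  by (auto simp: occ_at_def)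

lemma occ_at_rev: "occ_at w Y i \<Longrightarrow> occ_at (rev w) (rev Y) (length Y - length w - i)"
proof -
  assume a: "occ_at w Y i"
  let ?L = "length Y" and ?p = "length w"
  have le: "i + ?p \<le> ?L" and t: "take ?p (drop i Y) = w" using a by (auto simp: occ_at_def)
  have "take ?p (drop (?L - ?p - i) (rev Y)) = take ?p (rev (take (i + ?p) Y))"
    using le by (simp add: drop_rev add.commute)
  also have "\<dots> = rev (drop i (take (i + ?p) Y))"
    using le by (simp add: take_rev)
  also have "drop i (take (i + ?p) Y) = take ?p (drop i Y)"
    by (simp add: drop_take)
  finally show ?thesis using le t by (simp add: occ_at_def)
qed

lemma avoid_rev: "(\<forall>i. \<not> occ_at (rev w) (rev X) i) \<longleftrightarrow> (\<forall>i. \<not> occ_at w X i)"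
  using occ_at_rev[of w X] occ_at_rev[of "rev w" "rev X"] by auto

definition EE :: "nat \<Rightarrow> nat list \<Rightarrow> nat \<Rightarrow> nat list set" where
  "EE b w n = {Y \<in> bstrings b n. suffix w Y \<and> (\<forall>i. occ_at w Y i \<longrightarrow> i + length w = n)}"

definition AA :: "nat \<Rightarrow> nat list \<Rightarrow> nat \<Rightarrow> nat list set" where
  "AA b w m = {X \<in> bstrings b m. \<forall>i. \<not> occ_at w X i}"

definition VV :: "nat list \<Rightarrow> nat set" where
  "VV w = {k. k < length w \<and> drop k w = take (length w - k) w}"

lemma finite_bstrings: "finite (bstrings b n)"
proof -
  have "bstrings b n = {xs. set xs \<subseteq> {..<b} \<and> length xs = n}"
    unfolding bstrings_def by auto
  then show ?thesis using finite_lists_length_eq[of "{..<b}" n] by simp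
qed

lemma VV_D: "k \<in> VV w \<Longrightarrow> k < length w" "k \<in> VV w \<Longrightarrow> drop k w = take (length w - k) w"
  by (simp_all add: VV_def)

lemma EE_D: assumes "Y \<in> EE b w n"
  shows "length Y = n" "set Y \<subseteq> {..<b}" "suffix w Y" "\<And>i. occ_at w Y i \<Longrightarrow> i + length w = n"
  using assms by (simp_all add: EE_def bstrings_def)

lemma decomp:
  assumes "k < length w" "drop k w = take (length w - k) w" "suffix w Y"
    "length Y = m + length w - k"
  shows "take m Y @ w = Y @ drop (length w - k) w" "k \<le> m"
proof -
  obtain Z where Y: "Y = Z @ w" using assms(3) by (auto simp: suffix_def)
  show km: "k \<le> m" using assms(1,4) Y by simp
  have lz: "length Z = m - k" using assms(4) Y km by simp
  have tm: "take m Y = Z @ take k w" using Y lz km assms(1) by simp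
  have w: "w = take k w @ take (length w - k) w" using assms(2)
    by (metis append_take_drop_id)
  have "take k w @ w = w @ drop (length w - k) w"
    by (subst (2) w) (metis append.assoc append_take_drop_id w)
  then show "take m Y @ w = Y @ drop (length w - k) w" using tm Y by simp
qed

lemma occ_end: "suffix w Y \<Longrightarrow> occ_at w Y (length Y - length w)"
  by (auto simp: suffix_def occ_at_def)

lemma k_le:
  assumes "k1 \<in> VV w" "Y1 \<in> EE b w (m + length w - k1)"
    "k2 \<in> VV w" "Y2 \<in> EE b w (m + length w - k2)"
    "take m Y1 = take m Y2"
  shows "k1 \<le> k2"
proof (rule ccontr)
  assume c: "\<not> k1 \<le> k2"
  let ?p = "length w"
  have d1: "take m Y1 @ w = Y1 @ drop (?p - k1) w" "k1 \<le> m"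
    using decomp[OF VV_D(1)[OF assms(1)] VV_D(2)[OF assms(1)] EE_D(3)[OF assms(2)] EE_D(1)[OF assms(2)]] by blast+
  have d2: "take m Y2 @ w = Y2 @ drop (?p - k2) w" "k2 \<le> m"
    using decomp[OF VV_D(1)[OF assms(3)] VV_D(2)[OF assms(3)] EE_D(3)[OF assms(4)] EE_D(1)[OF assms(4)]] by blast+
  have l1: "length Y1 = m + ?p - k1" and l2: "length Y2 = m + ?p - k2"
    and s1: "suffix w Y1" and o2: "\<forall>i. occ_at w Y2 i \<longrightarrow> i + ?p = m + ?p - k2"
    using EE_D[OF assms(2)] EE_D[OF assms(4)] by blast+
  have k1p: "k1 < ?p" using VV_D(1)[OF assms(1)] .
  have k2p: "k2 < ?p" using VV_D(1)[OF assms(3)] .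
  have "occ_at w Y1 (m - k1)" using occ_end[OF s1] l1 d1 by simp
  then have "occ_at w (Y2 @ drop (?p - k2) w) (m - k1)"
    using d1 d2 assms(5) occ_at_append by metis
  moreover have "m - k1 + ?p \<le> length Y2" using l2 c d1(2) k2p by linarith
  ultimately have "occ_at w Y2 (m - k1)" by (rule occ_at_back)
  then have "m - k1 + ?p = m + ?p - k2" using o2 by blast
  then show False using c d1 d2 k1p by simp
qed

lemma rec_card:
  assumes "set w \<subseteq> {..<b}" "w \<noteq> []"
  shows "card (AA b w m) = (\<Sum>k\<in>VV w. card (EE b w (m + length w - k)))"
proof -
  let ?p = "length w"
  let ?S = "SIGMA k:VV w. EE b w (m + ?p - k)"
  let ?g = "\<lambda>(k, Y). take m (Y::nat list)"
  have inj: "inj_on ?g ?S"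
  proof (rule inj_onI, clarify)
    fix k1 Y1 k2 Y2
    assume a: "k1 \<in> VV w" "Y1 \<in> EE b w (m + ?p - k1)" "k2 \<in> VV w" "Y2 \<in> EE b w (m + ?p - k2)"
      "take m Y1 = take m Y2"
    have "k1 = k2" using k_le[OF a(1-4)] k_le[OF a(3,4,1,2)] a(5) by simp
    moreover have "take m Y1 @ w = Y1 @ drop (?p - k1) w"
      using decomp[OF VV_D(1)[OF a(1)] VV_D(2)[OF a(1)] EE_D(3)[OF a(2)] EE_D(1)[OF a(2)]] by blast
    moreover have "take m Y2 @ w = Y2 @ drop (?p - k2) w"
      using decomp[OF VV_D(1)[OF a(3)] VV_D(2)[OF a(3)] EE_D(3)[OF a(4)] EE_D(1)[OF a(4)]] by blast
    ultimately show "k1 = k2 \<and> Y1 = Y2" using a(5) by (metis append_same_eq)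
  qed
  have sub: "?g ` ?S \<subseteq> AA b w m"
  proof
    fix X assume "X \<in> ?g ` ?S"
    then obtain kY where kY: "kY \<in> ?S" and X0: "X = ?g kY" by (rule imageE)
    obtain k Y where kYe: "kY = (k, Y)" by (cases kY)
    have a: "k \<in> VV w" "Y \<in> EE b w (m + ?p - k)" using kY kYe by auto
    have X: "X = take m Y" using X0 kYe by simp
    have kp: "k < ?p" using VV_D(1)[OF a(1)] .
    have lY: "length Y = m + ?p - k" and sY: "set Y \<subseteq> {..<b}"
      and o: "\<forall>i. occ_at w Y i \<longrightarrow> i + ?p = m + ?p - k"
      using EE_D[OF a(2)] by blast+
    have "length (take m Y) = m" using lY kp by simp
    moreover have "set (take m Y) \<subseteq> {..<b}" by (rule subset_trans[OF set_take_subset sY])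
    moreover have "\<not> occ_at w (take m Y) i" for i
    proof
      assume "occ_at w (take m Y) i"
      then have "occ_at w (take m Y @ drop m Y) i" by (rule occ_at_append)
      then have "occ_at w Y i" by simp
      then have "i + ?p = m + ?p - k" using o by blast
      moreover have "i + ?p \<le> length (take m Y)" using \<open>occ_at w (take m Y) i\<close>
        unfolding occ_at_def by blast
      moreover have "length (take m Y) = m" using lY kp by simp
      ultimately show False using kp by linarith
    qed
    ultimately have "take m Y \<in> AA b w m" unfolding AA_def bstrings_def by blast
    then show "X \<in> AA b w m" using X by simp
  qed
  have sup: "AA b w m \<subseteq> ?g ` ?S"
  proof
    fix X assume X: "X \<in> AA b w m"
    have lX: "length X = m" and sX: "set X \<subseteq> {..<b}" and nX: "\<And>i. \<not> occ_at w X i"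
      using X unfolding AA_def bstrings_def by blast+
    have om: "occ_at w (X @ w) m" using lX by (simp add: occ_at_def)
    define i where "i = (LEAST i. occ_at w (X @ w) i)"
    have oi: "occ_at w (X @ w) i" unfolding i_def by (rule LeastI[of "\<lambda>i. occ_at w (X @ w) i", OF om])
    have im: "i \<le> m" unfolding i_def by (rule Least_le[of "\<lambda>i. occ_at w (X @ w) i", OF om])
    have ilt: "m < i + ?p"
    proof (rule ccontr)
      assume "\<not> m < i + ?p"
      then have "i + ?p \<le> length X" using lX by simp
      then have "occ_at w X i" by (rule occ_at_back[OF oi])
      then show False using nX by blast
    qed
    define k where "k = m - i"
    have kp: "k < ?p" using ilt im k_def by simp
    have dX: "drop i (X @ w) = drop i X @ w" using im lX by simp
    have ldi: "length (drop i X) = k" using lX k_def by simp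
    have weq: "w = drop i X @ take (?p - k) w"
    proof -
      have "take ?p (drop i (X @ w)) = w" using oi unfolding occ_at_def by blast
      then have "take ?p (drop i X @ w) = w" unfolding dX .
      then show ?thesis using ldi kp by (simp add: take_append)
    qed
    have kV: "k \<in> VV w"
    proof -
      have "drop k w = take (?p - k) w"
        using weq ldi by (metis append_eq_conv_conj)
      then show ?thesis using kp by (simp add: VV_def)
    qed
    define Y where "Y = X @ take (?p - k) w"
    have lY: "length Y = m + ?p - k" using Y_def lX kp by simp
    have YX: "Y @ drop (?p - k) w = X @ w" unfolding Y_def by simp
    have sufY: "suffix w Y"
    proof -
      have "Y = take i X @ (drop i X @ take (?p - k) w)" unfolding Y_def by simp
      then show ?thesis using weq by (metis suffix_def)
    qed
    have "set (take (?p - k) w) \<subseteq> {..<b}" by (rule subset_trans[OF set_take_subset assms(1)])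
    then have setY: "set Y \<subseteq> {..<b}" unfolding Y_def using sX by simp
    have occY: "j + ?p = m + ?p - k" if "occ_at w Y j" for j
    proof -
      have "occ_at w (X @ w) j" using occ_at_append[OF that] YX by metis
      then have "i \<le> j" unfolding i_def by (rule Least_le)
      moreover have "j + ?p \<le> m + ?p - k" using that lY by (simp add: occ_at_def)
      ultimately show ?thesis using k_def im kp by simp
    qed
    have "Y \<in> EE b w (m + ?p - k)" using lY sufY setY occY by (auto simp: EE_def bstrings_def)
    moreover have "take m Y = X" unfolding Y_def using lX by simp
    ultimately show "X \<in> ?g ` ?S" using kV by force
  qed
  have "bij_betw ?g ?S (AA b w m)" using inj sub sup by (auto simp: bij_betw_def)
  then have "card (AA b w m) = card ?S" by (simp add: bij_betw_same_card)
  also have "\<dots> = (\<Sum>k\<in>VV w. card (EE b w (m + ?p - k)))"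
  proof (rule card_SigmaI)
    show "finite (VV w)" by (rule finite_subset[of _ "{..<?p}"]) (auto simp: VV_def)
    show "\<forall>a\<in>VV w. finite (EE b w (m + ?p - a))"
      using finite_bstrings by (auto simp: EE_def)
  qed
  finally show ?thesis .
qed


lemma VV_rev: "VV (rev w) = VV w"
proof -
  have "(drop k (rev w) = take (length w - k) (rev w)) \<longleftrightarrow> (drop k w = take (length w - k) w)"
    if "k < length w" for k
  proof -
    have "drop k (rev w) = rev (take (length w - k) w)" by (simp add: drop_rev)
    moreover have "take (length w - k) (rev w) = rev (drop k w)" using that by (simp add: take_rev)
    ultimately show ?thesis by auto
  qed
  then show ?thesis unfolding VV_def by auto
qed

lemma AA_rev: "card (AA b (rev w) m) = card (AA b w m)"
proof -
  have "AA b (rev w) m = rev ` AA b w m"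
  proof
    show "AA b (rev w) m \<subseteq> rev ` AA b w m"
    proof
      fix X assume "X \<in> AA b (rev w) m"
      then have "rev X \<in> AA b w m" using avoid_rev[of w "rev X"]
        by (auto simp: AA_def bstrings_def)
      then show "X \<in> rev ` AA b w m" by (metis image_eqI rev_rev_ident)
    qed
    show "rev ` AA b w m \<subseteq> AA b (rev w) m"
      using avoid_rev by (auto simp: AA_def bstrings_def)
  qed
  then show ?thesis by (simp add: card_image)
qed

lemma EE_empty: "n < length w \<Longrightarrow> EE b w n = {}"
  by (auto simp: EE_def bstrings_def dest: suffix_length_le)

lemma EE_rev_card:
  assumes "set w \<subseteq> {..<b}" "w \<noteq> []"
  shows "card (EE b w n) = card (EE b (rev w) n)"
proof (induction n rule: less_induct)
  case (less n)
  let ?p = "length w"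
  show ?case
  proof (cases "n < ?p")
    case True
    then show ?thesis using EE_empty[of n w b] EE_empty[of n "rev w" b] by simp
  next
    case False
    define m where "m = n - ?p"
    have fin: "finite (VV w)" by (rule finite_subset[of _ "{..<?p}"]) (auto simp: VV_def)
    have z: "0 \<in> VV w" using assms(2) by (simp add: VV_def)
    have sw: "set (rev w) \<subseteq> {..<b}" "rev w \<noteq> []" using assms by auto
    have r1: "card (AA b w m) = card (EE b w n) + (\<Sum>k\<in>VV w - {0}. card (EE b w (m + ?p - k)))"
      using rec_card[OF assms, of m] sum.remove[OF fin z, of "\<lambda>k. card (EE b w (m + ?p - k))"] False m_def by simp
    have r2: "card (AA b (rev w) m) = card (EE b (rev w) n) + (\<Sum>k\<in>VV w - {0}. card (EE b (rev w) (m + ?p - k)))"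
      using rec_card[OF sw, of m] sum.remove[OF fin z, of "\<lambda>k. card (EE b (rev w) (m + ?p - k))"] False m_def VV_rev[of w] by simp
    have "(\<Sum>k\<in>VV w - {0}. card (EE b w (m + ?p - k))) = (\<Sum>k\<in>VV w - {0}. card (EE b (rev w) (m + ?p - k)))"
    proof (rule sum.cong)
      fix k assume "k \<in> VV w - {0}"
      then have "m + ?p - k < n" using False m_def by (auto simp: VV_def)
      then show "card (EE b w (m + ?p - k)) = card (EE b (rev w) (m + ?p - k))" by (rule less.IH)
    qed simp
    then show ?thesis using r1 r2 AA_rev[of b w m] by simp
  qed
qed


lemma suf_card:
  assumes "set w \<subseteq> {..<b}" "w \<noteq> []"
  shows "card {X \<in> bstrings b l. occ w X = 0 \<and> suffix (butlast w) X} = card (EE b w (Suc l))"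
proof -
  let ?S = "{X \<in> bstrings b l. occ w X = 0 \<and> suffix (butlast w) X}"
  let ?f = "\<lambda>X. X @ [last w]"
  let ?p = "length w"
  have wl: "w = butlast w @ [last w]" using assms(2) by simp
  have "last w \<in> set w" using assms(2) by simp
  then have lastin: "last w < b" using assms(1) by auto
  have inj: "inj_on ?f ?S" by (auto simp: inj_on_def)
  have sub: "?f ` ?S \<subseteq> EE b w (Suc l)"
  proof
    fix Y assume "Y \<in> ?f ` ?S"
    then obtain X where X: "X \<in> ?S" and Y: "Y = X @ [last w]" by auto
    have lX: "length X = l" and sX: "set X \<subseteq> {..<b}" and aX: "\<And>i. \<not> occ_at w X i"
      and sfX: "suffix (butlast w) X" using X occ0[of w X] by (auto simp: bstrings_def)
    obtain Z where Z: "X = Z @ butlast w" using sfX by (auto simp: suffix_def)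
    have "Y = Z @ w" using Y Z wl by (metis append.assoc)
    then have sY: "suffix w Y" by (simp add: suffix_def)
    have "i + ?p = Suc l" if "occ_at w Y i" for i
    proof -
      have "i + ?p \<le> Suc l" using that Y lX by (simp add: occ_at_def)
      moreover have "\<not> i + ?p \<le> l" using occ_at_back[of w X "[last w]" i] that Y lX aX by auto
      ultimately show ?thesis by simp
    qed
    then show "Y \<in> EE b w (Suc l)" using sY Y lX sX lastin by (auto simp: EE_def bstrings_def)
  qed
  have sup: "EE b w (Suc l) \<subseteq> ?f ` ?S"
  proof
    fix Y assume Y: "Y \<in> EE b w (Suc l)"
    have lY: "length Y = Suc l" and sY: "set Y \<subseteq> {..<b}" and sfY: "suffix w Y"
      and oY: "\<And>i. occ_at w Y i \<Longrightarrow> i + ?p = Suc l" using EE_D[OF Y] by blast+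
    obtain Z where Z: "Y = Z @ w" using sfY by (auto simp: suffix_def)
    define X where "X = Z @ butlast w"
    have YX: "Y = X @ [last w]" using Z X_def wl by (metis append.assoc)
    have lX: "length X = l" using YX lY by simp
    have "set X \<subseteq> set Y" using YX by auto
    then have sX: "set X \<subseteq> {..<b}" using sY by blast
    have aX: "\<not> occ_at w X i" for i
    proof
      assume o: "occ_at w X i"
      then have "i + ?p \<le> l" using lX by (simp add: occ_at_def)
      moreover have "occ_at w Y i" using occ_at_append[OF o] YX by simp
      ultimately show False using oY by fastforce
    qed
    have "suffix (butlast w) X" unfolding X_def by (simp add: suffix_def)
    then have "X \<in> ?S" using lX sX aX occ0[of w X] by (auto simp: bstrings_def)
    then show "Y \<in> ?f ` ?S" using YX by blast
  qed
  have "bij_betw ?f ?S (EE b w (Suc l))" using inj sub sup by (auto simp: bij_betw_def)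
  then show ?thesis by (rule bij_betw_same_card)
qed

lemma pre_card:
  "card {X \<in> bstrings b l. occ w X = 0 \<and> prefix (tl w) X}
   = card {X \<in> bstrings b l. occ (rev w) X = 0 \<and> suffix (butlast (rev w)) X}"
proof -
  have "{X \<in> bstrings b l. occ (rev w) X = 0 \<and> suffix (butlast (rev w)) X}
      = rev ` {X \<in> bstrings b l. occ w X = 0 \<and> prefix (tl w) X}"
  proof
    show "{X \<in> bstrings b l. occ (rev w) X = 0 \<and> suffix (butlast (rev w)) X}
      \<subseteq> rev ` {X \<in> bstrings b l. occ w X = 0 \<and> prefix (tl w) X}"
    proof
      fix X assume X: "X \<in> {X \<in> bstrings b l. occ (rev w) X = 0 \<and> suffix (butlast (rev w)) X}"
      then have "rev X \<in> {X \<in> bstrings b l. occ w X = 0 \<and> prefix (tl w) X}"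
        using avoid_rev[of w "rev X"] occ0[of w "rev X"] occ0[of "rev w" X]
        by (auto simp: bstrings_def suffix_to_prefix)
      then show "X \<in> rev ` {X \<in> bstrings b l. occ w X = 0 \<and> prefix (tl w) X}"
        by (metis image_eqI rev_rev_ident)
    qed
    show "rev ` {X \<in> bstrings b l. occ w X = 0 \<and> prefix (tl w) X}
      \<subseteq> {X \<in> bstrings b l. occ (rev w) X = 0 \<and> suffix (butlast (rev w)) X}"
      using avoid_rev occ0 by (auto simp: bstrings_def suffix_to_prefix)
  qed
  then show ?thesis by (simp add: card_image)
qed

theorem lemma6:
  fixes b :: nat and w :: "nat list"
  assumes "b \<ge> 2" and "length w \<ge> 1" and "set w \<subseteq> {..<b}"
  shows "Z_suffix b w (butlast w) = Z_prefix b w (tl w)"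
proof -
  have ne: "w \<noteq> []" using assms(2) by auto
  have sw: "set (rev w) \<subseteq> {..<b}" "rev w \<noteq> []" using assms(3) ne by auto
  show ?thesis
  proof (rule fps_ext)
    fix l
    have "card {X \<in> bstrings b l. occ w X = 0 \<and> suffix (butlast w) X}
        = card {X \<in> bstrings b l. occ w X = 0 \<and> prefix (tl w) X}"
      using suf_card[OF assms(3) ne, of l] suf_card[OF sw, of l] pre_card[of b l w]
        EE_rev_card[OF assms(3) ne, of "Suc l"] by simp
    then show "fps_nth (Z_suffix b w (butlast w)) l = fps_nth (Z_prefix b w (tl w)) l"
      by (simp add: Z_suffix_def Z_prefix_def)
  qed
qed

end
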